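(* Let $t \geq 4$ and $n \geq 1$ be integers, let $t' = [t/2]$, $x = \left[\frac{nt'-1}{t'-1}\right]$, and write $x-2 = tq + r$ with integers $q$ and $0 \leq r \leq t-1$. Let $R = R_{t-2,t}(K_{1,n})$. Then $R = x-1$ if and only if one of the following conditions holds: (a) $r = 1$, $\frac{2q+9}{3} < t \leq q+4$, $t$ is odd, and $x$ is even; (b) $r = 1$, $\frac{2q+9}{3} < t \leq q+4$, $t$ is odd, and $x$ is odd; (c) $1 < r < t-2$ and $\frac{2q+2r+7}{3} < t \leq q+r+3$ and $t$ is odd; (d) $r = t-2$ and either $t$ is even, or $t$ is odd and $t > \frac{2q+2r+7}{3}$.
   Context: $[a]$ denotes the integer part (floor) of a real number $a$. $K_{1,n}$ is the star with $n$ edges. For a graph $G$ and integers $1 \leq s < t$, $R_{s,t}(G)$ is the smallest positive integer $N$ such that every coloring of the edges of the complete graph $K_N$ with $t$ colors contains a (not necessarily induced) subgraph isomorphic to $G$ whose edges use at most $s$ distinct colors. *)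

theory Defs
  imports Main
begin

text \<open>An edge colouring of K_N (vertices 0..N-1) is a function c on 2-subsets of {..<N}.\<close>

definition has_copy_few_colors ::
  "nat \<Rightarrow> (nat set \<Rightarrow> nat) \<Rightarrow> nat \<Rightarrow> 'a set \<Rightarrow> 'a set set \<Rightarrow> bool" where
  "has_copy_few_colors N c s V E \<longleftrightarrow>
     (\<exists>f. inj_on f V \<and> f ` V \<subseteq> {..<N} \<and> card ((\<lambda>e. c (f ` e)) ` E) \<le> s)"

definition ramsey_st :: "nat \<Rightarrow> nat \<Rightarrow> 'a set \<Rightarrow> 'a set set \<Rightarrow> nat" where
  "ramsey_st s t V E = (LEAST N. 0 < N \<and>
     (\<forall>c :: nat set \<Rightarrow> nat. (\<forall>e. e \<subseteq> {..<N} \<and> card e = 2 \<longrightarrow> c e < t)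
        \<longrightarrow> has_copy_few_colors N c s V E))"

definition star_V :: "nat \<Rightarrow> nat set" where
  "star_V n = {..n}"

definition star_E :: "nat \<Rightarrow> nat set set" where
  "star_E n = {{0, i} | i. i \<in> {1..n}}"

end

theory Submission imports Defs "HOL-Number_Theory.Cong" begin

definition PP :: "nat \<Rightarrow> nat \<Rightarrow> nat \<Rightarrow> bool" where
 "PP t n N \<longleftrightarrow> (\<forall>c :: nat set \<Rightarrow> nat. (\<forall>e. e \<subseteq> {..<N} \<and> card e = 2 \<longrightarrow> c e < t)
        \<longrightarrow> has_copy_few_colors N c (t - 2) (star_V n) (star_E n))"

lemma ramsey_PP: "ramsey_st (t-2) t (star_V n) (star_E n) = (LEAST N. 0 < N \<and> PP t n N)"
  unfolding ramsey_st_def PP_def by simp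

lemma PP_mono: assumes "PP t n N" "N \<le> N'" shows "PP t n N'"
  unfolding PP_def
proof (intro allI impI)
  fix c :: "nat set \<Rightarrow> nat"
  assume h: "\<forall>e. e \<subseteq> {..<N'} \<and> card e = 2 \<longrightarrow> c e < t"
  have "\<forall>e. e \<subseteq> {..<N} \<and> card e = 2 \<longrightarrow> c e < t"
    using h assms(2) by (meson lessThan_subset_iff subset_trans)
  then have "has_copy_few_colors N c (t - 2) (star_V n) (star_E n)"
    using assms(1) unfolding PP_def by blast
  then show "has_copy_few_colors N' c (t - 2) (star_V n) (star_E n)"
    unfolding has_copy_few_colors_def using assms(2)
    by (meson lessThan_subset_iff subset_trans)
qed

lemma card_mod_ge:
  assumes "k < t"
  shows "M div t + (if k < M mod t then 1 else 0) \<le> card {i. i < M \<and> i mod t = k}"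
proof -
  define K where "K = M div t + (if k < M mod t then 1 else 0)"
  have t0: "t > 0" using assms by simp
  have sub: "(\<lambda>j. j * t + k) ` {..<K} \<subseteq> {i. i < M \<and> i mod t = k}"
  proof
    fix y assume "y \<in> (\<lambda>j. j * t + k) ` {..<K}"
    then obtain j where j: "j < K" "y = j * t + k" by auto
    have "y < M"
    proof (cases "j < M div t")
      case True
      then have "j * t + t \<le> M div t * t" 
        by (metis Suc_le_eq add.commute mult_Suc mult_le_mono1)
      then show ?thesis using j assms div_times_less_eq_dividend[of M t] by linarith
    next
      case False
      then have "j = M div t" "k < M mod t" using j unfolding K_def by (auto split: if_splits)
      then show ?thesis using j(2) by (metis add_less_mono div_mult_mod_eq le_refl nat_add_left_cancel_less not_less)
    qed
    moreover have "y mod t = k" using j assms by simp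
    ultimately show "y \<in> {i. i < M \<and> i mod t = k}" by simp
  qed
  have inj: "inj_on (\<lambda>j. j * t + k) {..<K}" using t0 by (auto simp: inj_on_def)
  have "card ((\<lambda>j. j * t + k) ` {..<K}) = K" using card_image[OF inj] by simp
  moreover have "card ((\<lambda>j. j * t + k) ` {..<K}) \<le> card {i. i < M \<and> i mod t = k}"
    by (rule card_mono[OF _ sub]) simp
  ultimately show ?thesis unfolding K_def by simp
qed

lemma Min_Max_pair: "v \<noteq> u \<Longrightarrow> Min {v, u} = min v u \<and> Max {v, u} = max v u"
  by (auto simp: min_def max_def)

lemma card_two_out:
  assumes "S \<subseteq> {..<t}" "card S \<le> t - 2" "t \<ge> 2"
  obtains k1 k2 where "k1 < t" "k2 < t" "k1 \<noteq> k2" "k1 \<notin> S" "k2 \<notin> S"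
proof -
  have "card ({..<t} - S) = t - card S" using assms(1) by (simp add: card_Diff_subset finite_subset)
  then have "card ({..<t} - S) \<ge> 2" using assms by linarith
  then obtain D where D: "D \<subseteq> {..<t} - S" "card D = 2"
    by (meson obtain_subset_with_card_n)
  then obtain k1 k2 where "D = {k1, k2}" "k1 \<noteq> k2" by (meson card_2_iff)
  then show ?thesis using that D by auto
qed

lemma avoid:
  fixes h :: "nat \<Rightarrow> nat \<Rightarrow> nat"
  assumes t: "t \<ge> 2" and n: "n \<ge> 1"
    and cntB: "\<And>v k1 k2. v < N \<Longrightarrow> k1 < t \<Longrightarrow> k2 < t \<Longrightarrow> k1 \<noteq> k2 \<Longrightarrow>
        B \<le> card {u \<in> {..<N} - {v}. h v u mod t = k1} + card {u \<in> {..<N} - {v}. h v u mod t = k2}"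
    and sym: "\<And>u v. h u v = h v u"
    and NB: "N \<le> n + B"
  shows "\<not> PP t n N"
proof
  assume PP: "PP t n N"
  define c where "c e = h (Min e) (Max e) mod t" for e :: "nat set"
  have cvu: "c {v, u} = h v u mod t" if "v \<noteq> u" for v u
  proof (cases "v \<le> u")
    case True
    then show ?thesis using Min_Max_pair[OF that] unfolding c_def by (simp add: min_def max_def)
  next
    case False
    then have "Min {v, u} = u" "Max {v, u} = v" using Min_Max_pair[OF that] by (auto simp: min_def max_def)
    then show ?thesis unfolding c_def using sym[of u v] by simp
  qed
  have "\<forall>e. e \<subseteq> {..<N} \<and> card e = 2 \<longrightarrow> c e < t" unfolding c_def using t by simp
  then have "has_copy_few_colors N c (t - 2) (star_V n) (star_E n)" using PP unfolding PP_def by blast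
  then obtain f where f: "inj_on f {..n}" "f ` {..n} \<subseteq> {..<N}"
     and cS: "card ((\<lambda>e. c (f ` e)) ` star_E n) \<le> t - 2"
    unfolding has_copy_few_colors_def star_V_def by blast
  define S where "S = (\<lambda>e. c (f ` e)) ` star_E n"
  define v where "v = f 0"
  have vN: "v < N" using f(2) unfolding v_def by auto
  have S_sub: "S \<subseteq> {..<t}" unfolding S_def c_def using t by auto
  obtain k1 k2 where k: "k1 < t" "k2 < t" "k1 \<noteq> k2" "k1 \<notin> S" "k2 \<notin> S"
    using card_two_out[OF S_sub] cS t unfolding S_def by blast
  define Y where "Y = {u \<in> {..<N} - {v}. h v u mod t \<in> S}"
  define A1 where "A1 = {u \<in> {..<N} - {v}. h v u mod t = k1}"
  define A2 where "A2 = {u \<in> {..<N} - {v}. h v u mod t = k2}"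
  have LY: "f ` {1..n} \<subseteq> Y"
  proof
    fix u assume "u \<in> f ` {1..n}"
    then obtain i where i: "i \<in> {1..n}" "u = f i" by auto
    have ne: "v \<noteq> u" using f(1) i unfolding v_def inj_on_def by force
    have "{0, i} \<in> star_E n" using i unfolding star_E_def by blast
    then have "c (f ` {0, i}) \<in> S" unfolding S_def by blast
    then have "h v u mod t \<in> S" using cvu[OF ne] i(2) unfolding v_def by simp
    moreover have "u < N" using f(2) i by auto
    ultimately show "u \<in> Y" unfolding Y_def using ne by auto
  qed
  have "card (f ` {1..n}) = n"
    using card_image[OF inj_on_subset[OF f(1)]] by auto
  moreover have "finite Y" unfolding Y_def by simp
  ultimately have nY: "n \<le> card Y" using LY card_mono by metis
  have disj: "Y \<inter> (A1 \<union> A2) = {}" "A1 \<inter> A2 = {}" unfolding Y_def A1_def A2_def using k by auto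
  have "Y \<union> (A1 \<union> A2) \<subseteq> {..<N} - {v}" unfolding Y_def A1_def A2_def by auto
  moreover have "card ({..<N} - {v}) = N - 1" using vN by simp
  ultimately have "card (Y \<union> (A1 \<union> A2)) \<le> N - 1"
    by (metis card_mono finite_Diff finite_lessThan)
  moreover have "card (Y \<union> (A1 \<union> A2)) = card Y + card A1 + card A2"
    using disj unfolding Y_def A1_def A2_def by (simp add: card_Un_disjoint)
  moreover have "B \<le> card A1 + card A2" using cntB[OF vN k(1,2,3)] unfolding A1_def A2_def .
  ultimately show False using nY NB vN by linarith
qed

definition rr :: "nat \<Rightarrow> nat \<Rightarrow> nat \<Rightarrow> nat" where
  "rr M v u = (if v = M then (2*u) mod M else if u = M then (2*v) mod M else (v+u) mod M)"

lemma rr_sym: "rr M v u = rr M u v"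
  unfolding rr_def by (auto simp: add.commute)

lemma mod_inj_lt: "(a::nat) < M \<Longrightarrow> b < M \<Longrightarrow> [a = b] (mod M) \<Longrightarrow> a = b"
  by (simp add: cong_def)

lemma rr_inj:
  assumes M: "odd M" and v: "v \<le> M"
  shows "inj_on (rr M v) ({..<Suc M} - {v})"
proof (rule inj_onI)
  fix u u' assume u: "u \<in> {..<Suc M} - {v}" and u': "u' \<in> {..<Suc M} - {v}"
    and eq: "rr M v u = rr M v u'"
  have cop: "coprime (2::nat) M" using M by simp
  show "u = u'"
  proof (cases "v = M")
    case True
    then have "u < M" "u' < M" using u u' by auto
    moreover have "[2*u = 2*u'] (mod M)" using eq True unfolding rr_def cong_def by simp
    then have "[u = u'] (mod M)" using cong_mult_lcancel_nat[OF cop] by blast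
    ultimately show ?thesis using mod_inj_lt by blast
  next
    case False
    then have vM: "v < M" using v by simp
    show ?thesis
    proof (cases "u = M \<or> u' = M")
      case True
      show ?thesis
      proof (rule ccontr)
        assume ne: "u \<noteq> u'"
        obtain w where w: "w \<in> {u, u'}" "w \<noteq> M" "w < M" "w \<noteq> v" "rr M v w = (2*v) mod M"
          using True ne u u' eq False unfolding rr_def by (auto split: if_splits)
        then have "[v + w = v + v] (mod M)" using False unfolding rr_def cong_def by (auto simp: mult_2)
        then have "[w = v] (mod M)" using cong_add_lcancel_nat by blast
        then show False using mod_inj_lt w vM by blast
      qed
    next
      case F2: False
      then have "u < M" "u' < M" using u u' by auto
      moreover have "[v + u = v + u'] (mod M)" using eq F2 False unfolding rr_def cong_def by simp
      then have "[u = u'] (mod M)" using cong_add_lcancel_nat by blast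
      ultimately show ?thesis using mod_inj_lt by blast
    qed
  qed
qed

lemma rr_range: "odd M \<Longrightarrow> rr M v u < M"
  unfolding rr_def by (cases "M = 0") auto

lemma rr_bij:
  assumes M: "odd M" and v: "v \<le> M"
  shows "rr M v ` ({..<Suc M} - {v}) = {..<M}"
proof -
  have sub: "rr M v ` ({..<Suc M} - {v}) \<subseteq> {..<M}" using rr_range[OF M] by auto
  have "card (rr M v ` ({..<Suc M} - {v})) = M"
    using card_image[OF rr_inj[OF M v]] v by simp
  then show ?thesis using card_subset_eq[OF _ sub] by simp
qed

lemma rr_count:
  assumes M: "odd M" and v: "v \<le> M"
  shows "card {u \<in> {..<Suc M} - {v}. rr M v u mod t = k} = card {i. i < M \<and> i mod t = k}"
proof -
  have "card {u \<in> {..<Suc M} - {v}. rr M v u mod t = k} = card (rr M v ` {u \<in> {..<Suc M} - {v}. rr M v u mod t = k})"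
    by (rule card_image[symmetric]) (rule inj_on_subset[OF rr_inj[OF M v]], auto)
  also have "rr M v ` {u \<in> {..<Suc M} - {v}. rr M v u mod t = k} = {i \<in> rr M v ` ({..<Suc M} - {v}). i mod t = k}"
    by auto
  also have "\<dots> = {i. i < M \<and> i mod t = k}" using rr_bij[OF M v] by auto
  finally show ?thesis .
qed

definition hc :: "nat \<Rightarrow> nat \<Rightarrow> nat \<Rightarrow> nat" where
  "hc N v u = (let d = (if v \<le> u then u - v else v - u) in min d (N - d))"

lemma hc_sym: "hc N v u = hc N u v"
  unfolding hc_def Let_def by auto

lemma circ_count:
  assumes N: "N = 2*H + 1" and v: "v < N"
  shows "2 * card {i. i < H \<and> i mod t = k} \<le> card {u \<in> {..<N} - {v}. (hc N v u - 1) mod t = k}"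
proof -
  define A where "A = {i. i < H \<and> i mod t = k}"
  define g1 where "g1 i = (if v+i+1 < N then v+i+1 else v+i+1-N)" for i
  define g2 where "g2 i = (if i+1 \<le> v then v-(i+1) else v+N-(i+1))" for i
  have g1p: "g1 i < N \<and> g1 i \<noteq> v \<and> hc N v (g1 i) = i+1" if "i < H" for i
    using that N v unfolding g1_def hc_def Let_def by (auto simp: min_def)
  have g2p: "g2 i < N \<and> g2 i \<noteq> v \<and> hc N v (g2 i) = i+1" if "i < H" for i
    using that N v unfolding g2_def hc_def Let_def by (auto simp: min_def)
  have i1: "inj_on g1 A" unfolding inj_on_def A_def g1_def using N v by auto
  have i2: "inj_on g2 A" unfolding inj_on_def A_def g2_def using N v by auto
  have dj: "g1 ` A \<inter> g2 ` A = {}" unfolding A_def g1_def g2_def using N v by auto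
  have sub: "g1 ` A \<union> g2 ` A \<subseteq> {u \<in> {..<N} - {v}. (hc N v u - 1) mod t = k}"
    using g1p g2p unfolding A_def by auto
  have fA: "finite A" unfolding A_def by simp
  have "card (g1 ` A \<union> g2 ` A) = 2 * card A"
    using card_Un_disjoint[OF _ _ dj] card_image[OF i1] card_image[OF i2] fA by simp
  moreover have "card (g1 ` A \<union> g2 ` A) \<le> card {u \<in> {..<N} - {v}. (hc N v u - 1) mod t = k}"
    by (rule card_mono[OF _ sub]) simp
  ultimately show ?thesis unfolding A_def by simp
qed

lemma fib_sum:
  assumes "finite X" "finite K"
  shows "card {u \<in> X. g u \<in> K} = (\<Sum>k\<in>K. card {u \<in> X. g u = k})"
proof -
  have "{u \<in> X. g u \<in> K} = (\<Union>k\<in>K. {u \<in> X. g u = k})" by auto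
  moreover have "card (\<Union>k\<in>K. {u \<in> X. g u = k}) = (\<Sum>k\<in>K. card {u \<in> X. g u = k})"
    by (rule card_UN_disjoint) (use assms in auto)
  ultimately show ?thesis by simp
qed

lemma upper:
  assumes t: "t \<ge> 4" and n: "n \<ge> 1"
    and N: "N = t * ((n-1) div (t-2)) + (n-1) mod (t-2) + 2"
  shows "PP t n N"
  unfolding PP_def
proof (intro allI impI)
  fix c :: "nat set \<Rightarrow> nat"
  assume col: "\<forall>e. e \<subseteq> {..<N} \<and> card e = 2 \<longrightarrow> c e < t"
  define a where "a = (n-1) div (t-2)"
  define b where "b = (n-1) mod (t-2)"
  have nab: "n - 1 = (t-2)*a + b" unfolding a_def b_def by simp
  have bl: "b < t - 2" unfolding b_def using t by simp
  have NN: "N = t*a + b + 2" using N unfolding a_def b_def by simp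
  define Nb where "Nb = {1..<N}"
  define cnt where "cnt k = card {u \<in> Nb. c {0,u} = k}" for k
  have colNb: "c {0,u} < t" if "u \<in> Nb" for u
  proof -
    have "{0,u} \<subseteq> {..<N}" "card {0,u} = 2" using that unfolding Nb_def by auto
    then show ?thesis using col by blast
  qed
  have tot: "(\<Sum>k<t. cnt k) = N - 1"
  proof -
    have "card {u \<in> Nb. c {0,u} \<in> {..<t}} = (\<Sum>k<t. cnt k)"
      unfolding cnt_def by (rule fib_sum) (auto simp: Nb_def)
    moreover have "{u \<in> Nb. c {0,u} \<in> {..<t}} = Nb" using colNb by auto
    ultimately show ?thesis unfolding Nb_def by simp
  qed
  have tne: "cnt ` {..<t} \<noteq> {}" using t by (metis image_is_empty lessThan_iff empty_iff not_gr0 not_numeral_le_zero)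
  obtain k1 where k1: "k1 < t" "cnt k1 = Min (cnt ` {..<t})"
    using Min_in[OF _ tne] by auto
  have k1min: "cnt k1 \<le> cnt k" if "k < t" for k using k1 that by simp
  have tne2: "cnt ` ({..<t} - {k1}) \<noteq> {}" 
  proof -
    have "(if k1 = 0 then 1 else 0) \<in> {..<t} - {k1}" using t by auto
    then show ?thesis by blast
  qed
  have "Min (cnt ` ({..<t} - {k1})) \<in> cnt ` ({..<t} - {k1})" by (rule Min_in) (use tne2 in auto)
  then obtain k2 where k2: "k2 \<in> {..<t} - {k1}" "cnt k2 = Min (cnt ` ({..<t} - {k1}))"
    by (metis imageE)
  have k2min: "cnt k2 \<le> cnt k" if "k < t" "k \<noteq> k1" for k using k2 that by simp
  define S where "S = {..<t} - {k1, k2}"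
  have cardS: "card S = t - 2" unfolding S_def using k1 k2 by (simp add: card_Diff_subset)
  have split: "(\<Sum>k<t. cnt k) = cnt k1 + cnt k2 + (\<Sum>k\<in>S. cnt k)"
  proof -
    have "(\<Sum>k<t. cnt k) = cnt k1 + (\<Sum>k\<in>{..<t} - {k1}. cnt k)"
      using k1 by (simp add: sum.remove)
    also have "(\<Sum>k\<in>{..<t} - {k1}. cnt k) = cnt k2 + (\<Sum>k\<in>{..<t} - {k1} - {k2}. cnt k)"
      using k2 by (simp add: sum.remove)
    finally show ?thesis unfolding S_def by (simp add: Diff_insert2[symmetric] insert_commute)
  qed
  have lowS: "(t-2) * cnt k2 \<le> (\<Sum>k\<in>S. cnt k)"
  proof -
    have "(\<Sum>k\<in>S. cnt k2) \<le> (\<Sum>k\<in>S. cnt k)" using k2min unfolding S_def by (intro sum_mono) auto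
    then show ?thesis using cardS by simp
  qed
  have bigS: "n \<le> (\<Sum>k\<in>S. cnt k)"
  proof (rule ccontr)
    assume "\<not> n \<le> (\<Sum>k\<in>S. cnt k)"
    then have sS: "(\<Sum>k\<in>S. cnt k) \<le> (t-2)*a + b" using nab by linarith
    have e: "(t-2)*(a+1) = (t-2)*a + (t-2)" by (simp add: distrib_left)
    have "(t-2) * cnt k2 < (t-2) * (a+1)" using lowS sS bl e by linarith
    then have "cnt k2 < a + 1" using mult_less_cancel1[of "t-2" "cnt k2" "a+1"] by blast
    then have "cnt k2 \<le> a" by simp
    moreover have "cnt k1 \<le> a" using k1min[of k2] k2 \<open>cnt k2 \<le> a\<close> by simp
    ultimately have "N - 1 \<le> (t-2)*a + b + 2*a" using tot split sS by linarith
    also have "\<dots> = t*a + b"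
    proof -
      obtain s where "t = 2 + s" using t le_Suc_ex[of 2 t] by auto
      then show ?thesis by (simp add: algebra_simps)
    qed
    finally show False using NN by linarith
  qed
  define Y where "Y = {u \<in> Nb. c {0,u} \<in> S}"
  have "card Y = (\<Sum>k\<in>S. cnt k)" unfolding Y_def cnt_def
    by (rule fib_sum) (auto simp: Nb_def S_def)
  then have "n \<le> card Y" using bigS by simp
  then obtain L where L: "L \<subseteq> Y" "card L = n" by (meson obtain_subset_with_card_n)
  have fL: "finite L" using L(2) n by (metis card.infinite not_one_le_zero)
  obtain g where g: "bij_betw g {1..n} L" using ex_bij_betw_nat_finite_1[OF fL] L(2) by auto
  define f where "f i = (if i = 0 then 0 else g i)" for i
  have gY: "g i \<in> Y" if "i \<in> {1..n}" for i using g L that by (auto simp: bij_betw_def)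
  have g0: "g i \<noteq> 0" "g i < N" if "i \<in> {1..n}" for i using gY[OF that] unfolding Y_def Nb_def by auto
  show "has_copy_few_colors N c (t - 2) (star_V n) (star_E n)"
    unfolding has_copy_few_colors_def
  proof (intro exI conjI)
    show "inj_on f (star_V n)"
      unfolding inj_on_def star_V_def f_def
    proof (intro ballI impI)
      fix i j assume ij: "i \<in> {..n}" "j \<in> {..n}" "(if i = 0 then 0 else g i) = (if j = 0 then 0 else g j)"
      show "i = j"
      proof (cases "i = 0 \<or> j = 0")
        case True
        have "i \<noteq> 0 \<Longrightarrow> g i \<noteq> 0" "j \<noteq> 0 \<Longrightarrow> g j \<noteq> 0" using g0(1) ij(1,2) by auto
        then show ?thesis using ij(3) True by (cases "i = 0"; cases "j = 0") auto
      next
        case False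
        then have "i \<in> {1..n}" "j \<in> {1..n}" "g i = g j" using ij by auto
        then show ?thesis using inj_onD[OF bij_betw_imp_inj_on[OF g]] by blast
      qed
    qed
    show "f ` star_V n \<subseteq> {..<N}" unfolding star_V_def f_def using g0 NN by auto
    have "(\<lambda>e. c (f ` e)) ` star_E n \<subseteq> S"
    proof
      fix y assume "y \<in> (\<lambda>e. c (f ` e)) ` star_E n"
      then obtain i where i: "i \<in> {1..n}" "y = c (f ` {0, i})" unfolding star_E_def by auto
      have "f ` {0, i} = {0, g i}" using i unfolding f_def by auto
      then show "y \<in> S" using gY[OF i(1)] i(2) unfolding Y_def by auto
    qed
    then show "card ((\<lambda>e. c (f ` e)) ` star_E n) \<le> t - 2"
      using cardS by (metis card_mono S_def finite_Diff finite_lessThan)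
  qed
qed

lemma avoid_rr:
  assumes t: "t \<ge> 2" and n: "n \<ge> 1" and M: "odd M"
    and pr: "\<And>k1 k2. k1 < t \<Longrightarrow> k2 < t \<Longrightarrow> k1 \<noteq> k2 \<Longrightarrow>
        B \<le> card {i. i < M \<and> i mod t = k1} + card {i. i < M \<and> i mod t = k2}"
    and NB: "Suc M \<le> n + B"
  shows "\<not> PP t n (Suc M)"
proof (rule avoid[OF t n _ rr_sym NB])
  fix v k1 k2 assume "v < Suc M" "k1 < t" "k2 < t" "k1 \<noteq> k2"
  then show "B \<le> card {u \<in> {..<Suc M} - {v}. rr M v u mod t = k1} + card {u \<in> {..<Suc M} - {v}. rr M v u mod t = k2}"
    using rr_count[OF M, of v] pr by simp
qed

definition rr2 :: "nat \<Rightarrow> nat \<Rightarrow> nat \<Rightarrow> nat" where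
  "rr2 M v u = (if v = Suc M then u else if u = Suc M then v else rr M v u)"

lemma rr2_sym: "rr2 M v u = rr2 M u v"
  unfolding rr2_def using rr_sym by auto

lemma avoid_rr2:
  assumes t: "t \<ge> 2" and n: "n \<ge> 1" and M: "odd M"
    and pr: "\<And>k. k < t \<Longrightarrow> A \<le> card {i. i < M \<and> i mod t = k}"
    and NB: "Suc (Suc M) \<le> n + 2*A"
  shows "\<not> PP t n (Suc (Suc M))"
proof (rule avoid[OF t n _ rr2_sym NB])
  have one: "A \<le> card {u \<in> {..<Suc (Suc M)} - {v}. rr2 M v u mod t = k}" if v: "v < Suc (Suc M)" and k: "k < t" for v k
  proof (cases "v = Suc M")
    case True
    have "{i. i < M \<and> i mod t = k} \<subseteq> {u \<in> {..<Suc (Suc M)} - {v}. rr2 M v u mod t = k}"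
      using True unfolding rr2_def by auto
    then have "card {i. i < M \<and> i mod t = k} \<le> card {u \<in> {..<Suc (Suc M)} - {v}. rr2 M v u mod t = k}"
      by (intro card_mono) auto
    then show ?thesis using pr[OF k] by linarith
  next
    case False
    then have vM: "v \<le> M" using v by simp
    have "{u \<in> {..<Suc M} - {v}. rr M v u mod t = k} \<subseteq> {u \<in> {..<Suc (Suc M)} - {v}. rr2 M v u mod t = k}"
      using False unfolding rr2_def by auto
    then have "card {u \<in> {..<Suc M} - {v}. rr M v u mod t = k} \<le> card {u \<in> {..<Suc (Suc M)} - {v}. rr2 M v u mod t = k}"
      by (intro card_mono) auto
    then show ?thesis using pr[OF k] rr_count[OF M vM, of t k] by linarith
  qed
  fix v k1 k2 assume "v < Suc (Suc M)" "k1 < t" "k2 < t" "k1 \<noteq> k2"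
  then show "2*A \<le> card {u \<in> {..<Suc (Suc M)} - {v}. rr2 M v u mod t = k1} + card {u \<in> {..<Suc (Suc M)} - {v}. rr2 M v u mod t = k2}"
    using one[of v k1] one[of v k2] by linarith
qed

lemma avoid_circ:
  assumes t: "t \<ge> 2" and n: "n \<ge> 1" and N: "N = 2*H + 1"
    and pr: "\<And>k. k < t \<Longrightarrow> A \<le> card {i. i < H \<and> i mod t = k}"
    and NB: "N \<le> n + 4*A"
  shows "\<not> PP t n N"
proof (rule avoid[OF t n, where h = "\<lambda>v u. hc N v u - 1"])
  show "\<And>u v. hc N u v - 1 = hc N v u - 1" using hc_sym by metis
  show "N \<le> n + 4*A" by (rule NB)
  have one: "2*A \<le> card {u \<in> {..<N} - {v}. (hc N v u - 1) mod t = k}" if v: "v < N" and k: "k < t" for v k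
    using circ_count[OF N v, of t k] pr[OF k] by linarith
  fix v k1 k2 assume "v < N" "k1 < t" "k2 < t" "k1 \<noteq> k2"
  then show "4*A \<le> card {u \<in> {..<N} - {v}. (hc N v u - 1) mod t = k1} + card {u \<in> {..<N} - {v}. (hc N v u - 1) mod t = k2}"
    using one[of v k1] one[of v k2] by linarith
qed

lemma lower:
  assumes t: "t \<ge> 4" and n: "n \<ge> 1"
    and a: "a = (n-1) div (t-2)" and b: "b = (n-1) mod (t-2)"
  shows "\<not>(b = 0 \<and> odd a \<and> even t) \<Longrightarrow> \<not> PP t n (t*a+b+1)"
    and "b = 0 \<and> odd a \<and> even t \<Longrightarrow> \<not> PP t n (t*a)"
proof -
  have nab: "n = (t-2)*a + b + 1" using n unfolding a b by simp
  have bl: "b < t - 2" unfolding b using t by simp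
  have ta: "t*a = (t-2)*a + 2*a"
  proof -
    obtain s where "t = 2 + s" using t le_Suc_ex[of 2 t] by auto
    then show ?thesis by (simp add: algebra_simps)
  qed
  have t2: "t \<ge> 2" using t by simp
  have divt: "(t*a + c) div t = a" if "c < t" for c using that t by simp
  {
    assume ne: "\<not>(b = 0 \<and> odd a \<and> even t)"
    show "\<not> PP t n (t*a+b+1)"
    proof (cases "even (t*a+b+1)")
      case True
      define M where "M = t*a+b"
      have M: "odd M" using True unfolding M_def by simp
      have Md: "M div t = a" unfolding M_def using divt bl by simp
      have "\<not> PP t n (Suc M)"
      proof (rule avoid_rr[OF t2 n M, where B = "2*a"])
        fix k1 k2 assume "k1 < t" "k2 < t" "k1 \<noteq> k2"
        then show "2*a \<le> card {i. i < M \<and> i mod t = k1} + card {i. i < M \<and> i mod t = k2}"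
          using card_mod_ge[of k1 t M] card_mod_ge[of k2 t M] Md by (auto split: if_splits)
      next
        show "Suc M \<le> n + 2*a" unfolding M_def using nab ta by linarith
      qed
      then show ?thesis unfolding M_def by simp
    next
      case odd: False
      show ?thesis
      proof (cases "b = 0")
        case False
        define M where "M = t*a+b-1"
        have MM: "t*a+b+1 = Suc (Suc M)" unfolding M_def using False by simp
        have M: "odd M"
        proof -
          have "\<not> even (Suc (Suc M))" using odd[unfolded MM] .
          then show ?thesis by simp
        qed
        have Md: "M div t = a" unfolding M_def using divt[of "b-1"] bl False by simp
        have "\<not> PP t n (Suc (Suc M))"
        proof (rule avoid_rr2[OF t2 n M, where A = a])
          fix k assume "k < t"
          then show "a \<le> card {i. i < M \<and> i mod t = k}" using card_mod_ge[of k t M] Md by linarith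
        next
          show "Suc (Suc M) \<le> n + 2*a" using MM nab ta by linarith
        qed
        then show ?thesis using MM by simp
      next
        case b0: True
        then have ea: "even a" using ne odd by auto
        define H where "H = t * (a div 2)"
        have NH: "t*a+b+1 = 2*H+1" unfolding H_def using ea b0 by simp
        show ?thesis
        proof (rule avoid_circ[OF t2 n NH, where A = "a div 2"])
          fix k assume "k < t"
          moreover have "H div t = a div 2" unfolding H_def using t by simp
          ultimately show "a div 2 \<le> card {i. i < H \<and> i mod t = k}" using card_mod_ge[of k t H] by linarith
        next
          show "t*a+b+1 \<le> n + 4*(a div 2)" using nab ta ea b0 by auto
        qed
      qed
    qed
  }
  {
    assume ex: "b = 0 \<and> odd a \<and> even t"
    define M where "M = t*a - 1"
    have a1: "a \<ge> 1" using ex by (cases a) auto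
    have MM: "t*a = Suc M" unfolding M_def using a1 t by (simp add: Suc_le_eq)
    have M: "odd M"
    proof -
      have "even (t*a)" using ex by simp
      then have "even (Suc M)" using MM by simp
      then show ?thesis by simp
    qed
    have Meq: "M = t*(a-1) + (t-1)"
    proof -
      obtain a' where "a = Suc a'" using a1 by (cases a) auto
      then show ?thesis unfolding M_def using t by simp
    qed
    have hlp: "(t*q + c) div t = q \<and> (t*q + c) mod t = c" if "c < t" for q c using that by simp
    have Md: "M div t = a - 1" "M mod t = t - 1" using hlp[of "t-1" "a-1"] t unfolding Meq by auto
    show "\<not> PP t n (t*a)"
    proof -
      have "\<not> PP t n (Suc M)"
      proof (rule avoid_rr[OF t2 n M, where B = "2*a - 1"])
        fix k1 k2 assume k: "k1 < t" "k2 < t" "k1 \<noteq> k2"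
        then have "k1 < t - 1 \<or> k2 < t - 1" by linarith
        then show "2*a - 1 \<le> card {i. i < M \<and> i mod t = k1} + card {i. i < M \<and> i mod t = k2}"
          using card_mod_ge[of k1 t M] card_mod_ge[of k2 t M] Md k a1 by (auto split: if_splits)
      next
        show "Suc M \<le> n + (2*a - 1)" using MM nab ta ex a1 by linarith
      qed
      then show ?thesis using MM by simp
    qed
  }
qed

lemma least_bounds:
  assumes "PP t n N1" "\<not> PP t n N0" "N1 > 0"
  shows "N0 < (LEAST N. 0 < N \<and> PP t n N)" "(LEAST N. 0 < N \<and> PP t n N) \<le> N1"
proof -
  let ?L = "LEAST N. 0 < N \<and> PP t n N"
  have L: "0 < ?L \<and> PP t n ?L" by (rule LeastI[of "\<lambda>N. 0 < N \<and> PP t n N" N1]) (use assms in simp)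
  show "N0 < ?L"
  proof (rule ccontr)
    assume "\<not> N0 < ?L"
    then have "?L \<le> N0" by simp
    then show False using PP_mono[of t n ?L N0] L assms(2) by blast
  qed
  show "?L \<le> N1" by (rule Least_le) (use assms in simp)
qed

lemma R_value:
  assumes t: "t \<ge> 4" and n: "n \<ge> 1"
    and a: "a = (n-1) div (t-2)" and b: "b = (n-1) mod (t-2)"
  shows "\<not>(b = 0 \<and> odd a \<and> even t) \<Longrightarrow> ramsey_st (t-2) t (star_V n) (star_E n) = t*a+b+2"
    and "b = 0 \<and> odd a \<and> even t \<Longrightarrow> t*a < ramsey_st (t-2) t (star_V n) (star_E n) \<and>
           ramsey_st (t-2) t (star_V n) (star_E n) \<le> t*a+2"
proof -
  have up: "PP t n (t*a+b+2)" using upper[OF t n] a b by simp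
  {
    assume ne: "\<not>(b = 0 \<and> odd a \<and> even t)"
    have lo: "\<not> PP t n (t*a+b+1)" using lower(1)[OF t n a b ne] .
    show "ramsey_st (t-2) t (star_V n) (star_E n) = t*a+b+2"
      unfolding ramsey_PP using least_bounds[OF up lo] by simp
  }
  {
    assume ex: "b = 0 \<and> odd a \<and> even t"
    have lo: "\<not> PP t n (t*a)" using lower(2)[OF t n a b ex] .
    show "t*a < ramsey_st (t-2) t (star_V n) (star_E n) \<and> ramsey_st (t-2) t (star_V n) (star_E n) \<le> t*a+2"
      unfolding ramsey_PP using least_bounds[OF up lo] ex by simp
  }
qed

lemma divmod_uniq:
  fixes T q r y :: int
  assumes "T > 0" "y = T*q + r" "0 \<le> r" "r < T"
  shows "q = y div T" "r = y mod T"
  using assms by (simp_all add: add.commute)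

lemma x_formula:
  fixes nn t' :: int
  assumes "t' \<ge> 2"
  shows "(nn*t' - 1) div (t' - 1) = nn + (nn - 1) div (t' - 1)"
proof -
  have eq: "nn*t' - 1 = (nn - 1) + (t' - 1)*nn" by (simp add: algebra_simps)
  have "(nn*t' - 1) div (t' - 1) = ((nn - 1) + (t' - 1)*nn) div (t' - 1)" unfolding eq ..
  also have "\<dots> = nn + (nn - 1) div (t' - 1)" using assms by (subst div_mult_self2) auto
  finally show ?thesis .
qed

lemma div_bounds:
  fixes p y :: int
  assumes "p > 0"
  shows "p * (y div p) \<le> y" "y < p * (y div p) + p"
proof -
  have "y = p*(y div p) + y mod p" by simp
  moreover have "0 \<le> y mod p" "y mod p < p" using assms by simp_all
  ultimately show "p * (y div p) \<le> y" "y < p * (y div p) + p" by linarith+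
qed

lemma mono_helper:
  fixes p e c :: int
  assumes "p \<ge> 0" "e \<ge> c"
  shows "p * e \<ge> p * c"
  using assms by (simp add: mult_left_mono)

lemma arith_even:
  fixes T nn A Bb x q r t' :: int
  assumes T: "T = 2*t'" "t' \<ge> 2"
    and nn: "nn - 1 = (T-2)*A + Bb" "0 \<le> Bb" "Bb < T - 2" "0 \<le> A"
    and x: "x = (nn*t' - 1) div (t' - 1)"
    and qr: "x - 2 = T*q + r" "0 \<le> r" "r \<le> T - 1"
  shows "T*A + Bb + 2 \<noteq> x - 1" "r \<noteq> T - 2" "Bb = 0 \<Longrightarrow> x = T*A + 1"
proof -
  define p where "p = t' - 1"
  have p1: "p \<ge> 1" using T unfolding p_def by simp
  have Tp: "T - 2 = 2*p" "T = 2*p + 2" unfolding p_def using T by simp_all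
  define e where "e = Bb div p"
  have eb: "p * e \<le> Bb" "Bb < p * e + p" unfolding e_def using div_bounds p1 by auto
  have e0: "e \<ge> 0" unfolding e_def using nn(2) p1 by (simp add: pos_imp_zdiv_nonneg_iff)
  have e1: "e \<le> 1"
  proof (rule ccontr)
    assume "\<not> e \<le> 1"
    then have "p * e \<ge> p * 2" using mono_helper[of p 2 e] p1 by simp
    then show False using eb nn(3) Tp by linarith
  qed
  have xd: "(nn - 1) div p = 2*A + e"
  proof -
    have "nn - 1 = Bb + p*(2*A)" using nn(1) Tp by (simp add: algebra_simps)
    then have "(nn - 1) div p = Bb div p + 2*A" using p1 by simp
    then show ?thesis unfolding e_def by simp
  qed
  have xv: "x = T*A + Bb + 1 + e"
  proof -
    have "x = nn + (nn - 1) div p" using x x_formula[OF T(2)] unfolding p_def by simp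
    also have "\<dots> = nn + 2*A + e" using xd by simp
    also have "nn = (T-2)*A + Bb + 1" using nn(1) by simp
    finally show ?thesis using Tp by (simp add: algebra_simps)
  qed
  show "T*A + Bb + 2 \<noteq> x - 1" using xv e1 by simp
  show "Bb = 0 \<Longrightarrow> x = T*A + 1"
  proof -
    assume "Bb = 0"
    then have "e = 0" unfolding e_def by simp
    then show ?thesis using xv \<open>Bb = 0\<close> by simp
  qed
  have Tpos: "T > 0" using Tp p1 by simp
  have r_eq: "r = (x - 2) mod T" using divmod_uniq(2)[OF Tpos qr(1) qr(2)] qr(3) by simp
  show "r \<noteq> T - 2"
  proof (cases "Bb + e - 1 \<ge> 0")
    case True
    have "x - 2 = T*A + (Bb + e - 1)" using xv by simp
    moreover have "Bb + e - 1 < T" using nn(3) e1 by simp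
    ultimately have "Bb + e - 1 = (x - 2) mod T" using True Tpos by (intro divmod_uniq(2)) auto
    then have "r = Bb + e - 1" using r_eq by simp
    then show ?thesis using nn(3) e1 by simp
  next
    case False
    then have "x - 2 = T*(A - 1) + (T - 1)" using xv nn(2) e0 by (simp add: algebra_simps)
    then have "T - 1 = (x - 2) mod T" using Tpos by (intro divmod_uniq(2)) auto
    then have "r = T - 1" using r_eq by simp
    then show ?thesis by simp
  qed
qed

lemma arith_odd:
  fixes T nn A Bb x q r t' :: int
  assumes T: "T = 2*t' + 1" "t' \<ge> 2"
    and nn: "nn - 1 = (T-2)*A + Bb" "0 \<le> Bb" "Bb < T - 2" "0 \<le> A"
    and x: "x = (nn*t' - 1) div (t' - 1)"
    and qr: "x - 2 = T*q + r" "0 \<le> r" "r \<le> T - 1"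
  shows "T*A + Bb + 2 = x - 1 \<longleftrightarrow>
     (1 \<le> r \<and> r \<le> T - 2 \<and> 2*q + 2*r + 7 < 3*T \<and> (r = T - 2 \<or> T \<le> q + r + 3))"
proof -
  define p where "p = t' - 1"
  have p1: "p \<ge> 1" using T unfolding p_def by simp
  have Tp: "T - 2 = 2*p + 1" "T = 2*p + 3" unfolding p_def using T by simp_all
  have Tpos: "T > 0" using Tp p1 by simp
  define f where "f = (A + Bb) div p"
  have fb: "p * f \<le> A + Bb" "A + Bb < p * f + p" unfolding f_def using div_bounds p1 by auto
  have f0: "f \<ge> 0" unfolding f_def using nn(2,4) p1 by (simp add: pos_imp_zdiv_nonneg_iff)
  have xd: "(nn - 1) div p = 2*A + f"
  proof -
    have "nn - 1 = (A + Bb) + p*(2*A)" using nn(1) Tp by (simp add: algebra_simps)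
    then have "(nn - 1) div p = (A + Bb) div p + 2*A" using p1 by simp
    then show ?thesis unfolding f_def by simp
  qed
  have xv: "x = T*A + Bb + 1 + f"
  proof -
    have "x = nn + (nn - 1) div p" using x x_formula[OF T(2)] unfolding p_def by simp
    also have "\<dots> = nn + 2*A + f" using xd by simp
    also have "nn = (T-2)*A + Bb + 1" using nn(1) by simp
    finally show ?thesis using Tp by (simp add: algebra_simps)
  qed
  define u where "u = Bb + f - 1"
  have x2: "x - 2 = T*A + u" unfolding u_def using xv by simp
  have r_eq: "r = (x - 2) mod T" and q_eq: "q = (x - 2) div T"
    using divmod_uniq[OF Tpos qr(1) qr(2)] qr(3) by simp_all
  have small: "q = A \<and> r = u" if "0 \<le> u" "u < T"
  proof -
    have "A = (x - 2) div T" "u = (x - 2) mod T" using x2 that Tpos by (intro divmod_uniq; auto)+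
    then show ?thesis using r_eq q_eq by simp
  qed
  show ?thesis
  proof
    assume "T*A + Bb + 2 = x - 1"
    then have f2: "f = 2" using xv by simp
    have "p * 2 \<le> A + Bb" "A + Bb < p * 2 + p" using fb f2 by simp_all
    moreover have "q = A" "r = Bb + 1" using small[of] f2 nn(2,3) unfolding u_def by auto
    ultimately show "1 \<le> r \<and> r \<le> T - 2 \<and> 2*q + 2*r + 7 < 3*T \<and> (r = T - 2 \<or> T \<le> q + r + 3)"
      using nn(2,3) Tp by auto
  next
    assume c: "1 \<le> r \<and> r \<le> T - 2 \<and> 2*q + 2*r + 7 < 3*T \<and> (r = T - 2 \<or> T \<le> q + r + 3)"
    have qr3: "q + r \<le> 3*p" using c Tp by linarith
    show "T*A + Bb + 2 = x - 1"
    proof (cases "f \<le> 1")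
      case True
      have "A + Bb < p * 2"
      proof -
        have "p * f \<le> p * 1" using mono_helper[of p f 1] True p1 by simp
        then have "p * f \<le> p" by simp
        then show ?thesis using fb by linarith
      qed
      show ?thesis
      proof (cases "u \<ge> 0")
        case True
        have "u < T" unfolding u_def using \<open>f \<le> 1\<close> nn(3) by simp
        then have "q = A" "r = u" using small True by auto
        then show ?thesis using c \<open>A + Bb < p * 2\<close> \<open>f \<le> 1\<close> nn(3) Tp unfolding u_def by auto
      next
        case False
        then have "x - 2 = T*(A - 1) + (T - 1)" using x2 unfolding u_def using nn(2) f0
          by (simp add: algebra_simps)
        then have "T - 1 = (x - 2) mod T" using Tpos by (intro divmod_uniq(2)) auto
        then show ?thesis using r_eq c by simp
      qed
    next
      case False
      then have f3: "f \<ge> 2" by simp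
      show ?thesis
      proof (cases "f = 2")
        case True then show ?thesis using xv by simp
      next
        case False
        then have f3: "f \<ge> 3" using f3 by simp
        have pf3: "p * f \<ge> p * 3" using mono_helper[of p 3 f] f3 p1 by simp
        define k where "k = u div T"
        have uk: "u = T*k + r" unfolding k_def r_eq x2 using Tpos by simp
        have k0: "k \<ge> 0" unfolding k_def u_def using nn(2) f3 Tpos by (simp add: pos_imp_zdiv_nonneg_iff)
        have qk: "q = A + k" unfolding q_eq x2 k_def using Tpos by simp
        show ?thesis
        proof (cases "k = 0")
          case True
          then have "r = u" "q = A" using uk qk by simp_all
          then have False using qr3 fb pf3 f3 unfolding u_def by linarith
          then show ?thesis ..
        next
          case False
          then have "k \<ge> 1" using k0 by simp
          then have "T*k \<ge> T*1" using mono_helper[of T 1 k] Tpos by simp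
          then have "f \<ge> 5" using uk c Tp nn(3) unfolding u_def by linarith
          then have "p * f \<ge> p * 5" using mono_helper[of p 5 f] p1 by simp
          then have "A \<ge> 3*p" using fb nn(3) Tp by linarith
          then have False using qr3 qk \<open>k \<ge> 1\<close> c by linarith
          then show ?thesis ..
        qed
      qed
    qed
  qed
qed


theorem theorem7:
  fixes t n :: nat and t' x q r :: int
  assumes "t \<ge> 4" and "n \<ge> 1"
    and "t' = int t div 2"
    and "x = (int n * t' - 1) div (t' - 1)"
    and "x - 2 = int t * q + r" and "0 \<le> r" and "r \<le> int t - 1"
  shows "int (ramsey_st (t - 2) t (star_V n) (star_E n)) = x - 1 \<longleftrightarrow>
    ((r = 1 \<and> 2 * q + 9 < 3 * int t \<and> int t \<le> q + 4 \<and> odd t \<and> even x) \<or>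
     (r = 1 \<and> 2 * q + 9 < 3 * int t \<and> int t \<le> q + 4 \<and> odd t \<and> odd x) \<or>
     (1 < r \<and> r < int t - 2 \<and> 2 * q + 2 * r + 7 < 3 * int t \<and> int t \<le> q + r + 3 \<and> odd t) \<or>
     (r = int t - 2 \<and> (even t \<or> (odd t \<and> 2 * q + 2 * r + 7 < 3 * int t))))"
proof -
  note t = assms(1) and n = assms(2)
  define a where "a = (n-1) div (t-2)"
  define b where "b = (n-1) mod (t-2)"
  define R where "R = ramsey_st (t - 2) t (star_V n) (star_E n)"
  have nab: "n - 1 = (t-2)*a + b" unfolding a_def b_def by simp
  have bl: "b < t - 2" unfolding b_def using t by simp
  have inn: "int n - 1 = (int t - 2) * int a + int b"
  proof -
    have "int (n - 1) = int ((t-2)*a + b)" using nab by simp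
    then show ?thesis using n t by (simp add: of_nat_diff)
  qed
  have ib: "0 \<le> int b" "int b < int t - 2" using bl t by linarith+
  have ia: "0 \<le> int a" by simp
  have qr: "x - 2 = int t * q + r" "0 \<le> r" "r \<le> int t - 1" using assms by simp_all
  have x: "x = (int n * t' - 1) div (t' - 1)" using assms by simp
  show ?thesis
  proof (cases "even t")
    case True
    have T: "int t = 2*t'" "t' \<ge> 2" using True t assms(3) by (auto elim!: evenE)
    note AE = arith_even[OF T inn ib ia x qr]
    have rhs: "\<not> ((r = 1 \<and> 2 * q + 9 < 3 * int t \<and> int t \<le> q + 4 \<and> odd t \<and> even x) \<or>
     (r = 1 \<and> 2 * q + 9 < 3 * int t \<and> int t \<le> q + 4 \<and> odd t \<and> odd x) \<or>
     (1 < r \<and> r < int t - 2 \<and> 2 * q + 2 * r + 7 < 3 * int t \<and> int t \<le> q + r + 3 \<and> odd t) \<or>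
     (r = int t - 2 \<and> (even t \<or> (odd t \<and> 2 * q + 2 * r + 7 < 3 * int t))))"
      using True AE(2) by auto
    have lhs: "int R \<noteq> x - 1"
    proof (cases "b = 0 \<and> odd a \<and> even t")
      case False
      then have "R = t*a+b+2" using R_value(1)[OF t n a_def b_def] unfolding R_def by blast
      then show ?thesis using AE(1) by simp
    next
      case True
      then have "t*a < R" using R_value(2)[OF t n a_def b_def] unfolding R_def by blast
      moreover have "x = int t * int a + 1" using AE(3) True by simp
      ultimately have "int (t * a) < int R" "x - 1 = int t * int a" by (simp only: of_nat_less_iff, simp)
      then have "int t * int a < int R" "x - 1 = int t * int a" by (simp_all only: of_nat_mult)
      then show ?thesis by linarith
    qed
    show ?thesis using lhs rhs unfolding R_def by blast
  next
    case False
    have T: "int t = 2*t' + 1" "t' \<ge> 2" using False t assms(3) by (auto elim!: oddE)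
    have "R = t*a+b+2" using R_value(1)[OF t n a_def b_def] False unfolding R_def by blast
    then have lhs: "int R = x - 1 \<longleftrightarrow> int t * int a + int b + 2 = x - 1" by simp
    note AO = arith_odd[OF T inn ib ia x qr]
    show ?thesis unfolding R_def[symmetric] lhs AO using False t by auto
  qed
qed

end
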